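(* Let $p\in\mathbb{N}_0$, $\eta>0$ and $\theta\in\mathbb{R}$, and write $x=\cosh\eta$. Then \begin{align*} (\cosh\eta-\cos\theta)^p\log(\cosh\eta-\cos\theta) &=(\eta-\log 2)(\cosh\eta-\cos\theta)^p\\ &\quad+2\sum_{n=0}^{p}\cos(n\theta)\,e^{-n\eta}\sum_{k=-p}^{n-1}\frac{(-1)^{k+1}e^{k\eta}R_p^k(x)}{n-k}\\ &\quad-2\sum_{n=1}^{p-1}\cos(n\theta)\,e^{n\eta}\sum_{k=-p}^{-n-1}\frac{(-1)^{k+1}e^{k\eta}R_p^k(x)}{n+k}\\ &\quad+2\sum_{n=p+1}^{\infty}\cos(n\theta)\,e^{-n\eta}\sum_{k=-p}^{p}\frac{(-1)^{k+1}e^{k\eta}R_p^k(x)}{n-k}. \end{align*}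
   Context: $\log$ denotes the natural logarithm. The logarithmic polynomials $R_p^k(x)$, for $p\in\mathbb{N}_0$ and $k\in\mathbb{Z}$, are defined by $R_0^0(x)=1$, $R_0^k(x)=0$ for $k\neq 0$, and the recurrence $R_p^k(x)=\tfrac12 R_{p-1}^{k-1}(x)+xR_{p-1}^k(x)+\tfrac12 R_{p-1}^{k+1}(x)$ for $p\ge 1$ (so $R_p^k=0$ unless $-p\le k\le p$). Empty sums (upper limit smaller than lower limit) are zero. *)

theory Defs
  imports "HOL-Analysis.Analysis"
begin

fun logR :: "nat \<Rightarrow> int \<Rightarrow> real \<Rightarrow> real" where
  "logR 0 k x = (if k = 0 then 1 else 0)"
| "logR (Suc p) k x = logR p (k - 1) x / 2 + x * logR p k x + logR p (k + 1) x / 2"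

end

theory Submission
  imports Defs
begin


lemma logR_zero: "\<bar>k\<bar> > int p \<Longrightarrow> logR p k x = 0"
  by (induction p arbitrary: k) auto

lemma logR_sum_ext:
  "finite S \<Longrightarrow> {-int p..int p} \<subseteq> S \<Longrightarrow>
   (\<Sum>k\<in>S. logR p k x * h k) = (\<Sum>k\<in>{-int p..int p}. logR p k x * h k)"
  by (rule sum.mono_neutral_right) (auto simp: logR_zero)

lemma m1_powi: "(-1::real) powi (j+1) = - ((-1) powi j)"
  by (simp add: power_int_add)

lemma m1_powi': "(-1::real) powi (j-1) = - ((-1) powi j)"
  by (simp add: power_int_diff)

lemma trig:
  "(\<Sum>k\<in>{-int p..int p}. (-1) powi k * logR p k x * cos (of_int k * \<theta> + \<phi>)) = (x - cos \<theta>)^p * cos \<phi>"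
proof (induction p arbitrary: \<phi>)
  case 0 show ?case by simp
next
  case (Suc p)
  let ?A = "{-int (Suc p)..int (Suc p)}"
  let ?B = "{-int p..int p}"
  define c where "c \<phi> = (\<Sum>k\<in>?B. (-1) powi k * logR p k x * cos (of_int k * \<theta> + \<phi>))" for \<phi>
  have e1: "(\<Sum>k\<in>?A. logR p (k-1) x * ((-1) powi k * cos (of_int k * \<theta> + \<phi>))) = - c (\<phi> + \<theta>)"
  proof -
    have "(\<Sum>k\<in>?A. logR p (k-1) x * ((-1) powi k * cos (of_int k * \<theta> + \<phi>)))
       = (\<Sum>j\<in>(\<lambda>k. k-1)`?A. logR p j x * ((-1) powi (j+1) * cos (of_int (j+1) * \<theta> + \<phi>)))"
      by (subst sum.reindex) (auto simp: inj_on_def)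
    also have "\<dots> = (\<Sum>j\<in>?B. logR p j x * ((-1) powi (j+1) * cos (of_int (j+1) * \<theta> + \<phi>)))"
      by (rule logR_sum_ext) (auto simp: image_iff intro!: bexI[where x="_ + 1"])
    also have "\<dots> = - c (\<phi> + \<theta>)"
      unfolding c_def sum_negf[symmetric]
      by (rule sum.cong) (simp_all add: m1_powi algebra_simps)
    finally show ?thesis .
  qed
  have e3: "(\<Sum>k\<in>?A. logR p (k+1) x * ((-1) powi k * cos (of_int k * \<theta> + \<phi>))) = - c (\<phi> - \<theta>)"
  proof -
    have "(\<Sum>k\<in>?A. logR p (k+1) x * ((-1) powi k * cos (of_int k * \<theta> + \<phi>)))
       = (\<Sum>j\<in>(\<lambda>k. k+1)`?A. logR p j x * ((-1) powi (j-1) * cos (of_int (j-1) * \<theta> + \<phi>)))"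
      by (subst sum.reindex) (auto simp: inj_on_def)
    also have "\<dots> = (\<Sum>j\<in>?B. logR p j x * ((-1) powi (j-1) * cos (of_int (j-1) * \<theta> + \<phi>)))"
      by (rule logR_sum_ext) (auto simp: image_iff intro!: bexI[where x="_ - 1"])
    also have "\<dots> = - c (\<phi> - \<theta>)"
      unfolding c_def sum_negf[symmetric]
      by (rule sum.cong) (simp_all add: m1_powi' algebra_simps)
    finally show ?thesis .
  qed
  have e2: "(\<Sum>k\<in>?A. logR p k x * ((-1) powi k * cos (of_int k * \<theta> + \<phi>))) = c \<phi>"
  proof -
    have "(\<Sum>k\<in>?A. logR p k x * ((-1) powi k * cos (of_int k * \<theta> + \<phi>)))
       = (\<Sum>k\<in>?B. logR p k x * ((-1) powi k * cos (of_int k * \<theta> + \<phi>)))"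
      by (rule logR_sum_ext) auto
    then show ?thesis unfolding c_def by (simp add: ac_simps)
  qed
  have "(\<Sum>k\<in>?A. (-1) powi k * logR (Suc p) k x * cos (of_int k * \<theta> + \<phi>))
     = (\<Sum>k\<in>?A. logR p (k-1) x * ((-1) powi k * cos (of_int k * \<theta> + \<phi>)) / 2
          + x * (logR p k x * ((-1) powi k * cos (of_int k * \<theta> + \<phi>)))
          + logR p (k+1) x * ((-1) powi k * cos (of_int k * \<theta> + \<phi>)) / 2)"
    by (rule sum.cong) (simp_all add: algebra_simps)
  also have "\<dots> = - c (\<phi> + \<theta>) / 2 + x * c \<phi> - c (\<phi> - \<theta>) / 2"
    unfolding sum.distrib sum_divide_distrib[symmetric] sum_distrib_left[symmetric] e1 e2 e3
    by simp
  also have "\<dots> = (x - cos \<theta>)^Suc p * cos \<phi>"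
    unfolding c_def Suc.IH by (simp add: cos_add cos_diff algebra_simps diff_divide_distrib add_divide_distrib)
  finally show ?case .
qed



lemma log_series:
  fixes \<eta> \<theta> :: real
  assumes "\<eta> > 0"
  shows "(\<lambda>m. -2 * exp (- real m * \<eta>) * cos (real m * \<theta>) / real m) sums (ln (cosh \<eta> - cos \<theta>) - (\<eta> - ln 2))"
proof -
  define z where "z = exp (Complex (-\<eta>) \<theta>)"
  have Rez: "Re z = exp (-\<eta>) * cos \<theta>" and Imz: "Im z = exp (-\<eta>) * sin \<theta>"
    by (simp_all add: z_def Re_exp Im_exp)
  have nz: "norm z < 1" using assms by (simp add: z_def norm_exp_eq_Re)
  have "(\<lambda>n. - ((z)^n) / of_nat n) sums ln (1 - z)"
    using Ln_series'[of "-z"] nz by simp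
  from sums_Re[OF this] have s1: "(\<lambda>n. Re (- (z^n) / of_nat n)) sums Re (ln (1 - z))" .
  have t: "Re (- (z^n) / of_nat n) = - exp (- real n * \<eta>) * cos (real n * \<theta>) / real n" for n
  proof -
    have "z^n = exp (of_nat n * Complex (-\<eta>) \<theta>)" by (simp add: z_def exp_of_nat_mult)
    also have "of_nat n * Complex (-\<eta>) \<theta> = Complex (- real n * \<eta>) (real n * \<theta>)"
      by (simp add: complex_eq_iff)
    finally have "Re (z^n) = exp (- real n * \<eta>) * cos (real n * \<theta>)" by (simp add: Re_exp)
    then show ?thesis by (simp add: Re_divide_of_nat)
  qed
  have nz1: "1 - z \<noteq> 0" using nz by auto
  have r: "Re (ln (1 - z)) = ln (norm (1 - z))" using nz1 by simp
  have c2: "(norm (1 - z))^2 = 1 - 2 * exp (-\<eta>) * cos \<theta> + exp (-\<eta>)^2"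
  proof -
    have "(norm (1 - z))^2 = (1 - exp (-\<eta>) * cos \<theta>)^2 + (exp (-\<eta>) * sin \<theta>)^2"
      unfolding cmod_power2 using Rez Imz by simp
    also have "\<dots> = 1 - 2 * exp (-\<eta>) * cos \<theta> + exp (-\<eta>)^2 * ((sin \<theta>)^2 + (cos \<theta>)^2)"
      by algebra
    finally show ?thesis by simp
  qed
  have ee: "exp \<eta> * exp (-\<eta>) = 1" by (simp add: exp_minus)
  have ch: "cosh \<eta> - cos \<theta> = exp \<eta> / 2 * (norm (1 - z))^2"
    unfolding c2 cosh_def using ee by (simp add: algebra_simps power2_eq_square)
  have pos: "norm (1 - z) > 0" using nz1 by simp
  have "ln (cosh \<eta> - cos \<theta>) = ln (exp \<eta> / 2) + ln ((norm (1 - z))^2)"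
    unfolding ch using pos by (subst ln_mult) auto
  also have "\<dots> = \<eta> - ln 2 + 2 * ln (norm (1 - z))"
    using pos by (simp add: ln_div ln_realpow)
  finally have L: "ln (cosh \<eta> - cos \<theta>) - (\<eta> - ln 2) = 2 * Re (ln (1 - z))" using r by simp
  have "(\<lambda>n. 2 * Re (- (z^n) / of_nat n)) sums (2 * Re (ln (1 - z)))" by (rule sums_mult[OF s1])
  then show ?thesis unfolding L t by (simp add: mult.assoc)
qed

theorem mainTheorem1:
  fixes p :: nat and \<eta> \<theta> :: real
  assumes "\<eta> > 0"
  defines "x \<equiv> cosh \<eta>"
  shows "(\<lambda>m. let n = m + p + 1 in
            2 * cos (real n * \<theta>) * exp (- real n * \<eta>) *
            (\<Sum>k\<in>{-int p..int p}. (-1) powi (k + 1) * exp (real_of_int k * \<eta>) * logR p k x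
                                        / (real n - real_of_int k)))
         sums
         ((cosh \<eta> - cos \<theta>) ^ p * ln (cosh \<eta> - cos \<theta>)
          - ((\<eta> - ln 2) * (cosh \<eta> - cos \<theta>) ^ p
             + 2 * (\<Sum>n=0..p. cos (real n * \<theta>) * exp (- real n * \<eta>) *
                 (\<Sum>k\<in>{-int p..int n - 1}. (-1) powi (k + 1) * exp (real_of_int k * \<eta>) * logR p k x
                                        / (real n - real_of_int k)))
             - 2 * (\<Sum>n\<in>{1..<p}. cos (real n * \<theta>) * exp (real n * \<eta>) *
                 (\<Sum>k\<in>{-int p..-int n - 1}. (-1) powi (k + 1) * exp (real_of_int k * \<eta>) * logR p k x
                                        / (real n + real_of_int k)))))"

proof -
  define a where "a k = (-1) powi k * logR p k x" for k :: int
  define g where "g k m = -2 * a k * exp (- real m * \<eta>) * cos (of_int k * \<theta> + real m * \<theta>) / real m" for k m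
  define K where "K = {-int p..int p}"
  define f where "f k n = -2 * a k * exp (- (of_int n - of_int k) * \<eta>) * cos (of_int n * \<theta>) / (of_int n - of_int k)" for k n :: int
  define N where "N k = nat (int p + 1 - k)" for k
  have finK: "finite K" by (simp add: K_def)
  have gsum: "(\<Sum>k\<in>K. g k m) = (x - cos \<theta>)^p * (-2 * exp (- real m * \<eta>) * cos (real m * \<theta>) / real m)" for m
  proof -
    have "(\<Sum>k\<in>K. g k m) = (-2 * exp (- real m * \<eta>) / real m) *
       (\<Sum>k\<in>{-int p..int p}. (-1) powi k * logR p k x * cos (of_int k * \<theta> + real m * \<theta>))"
      unfolding sum_distrib_left K_def by (rule sum.cong) (simp_all add: g_def a_def)
    also have "\<dots> = (x - cos \<theta>)^p * (-2 * exp (- real m * \<eta>) * cos (real m * \<theta>) / real m)"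
      by (simp add: trig)
    finally show ?thesis .
  qed
  have comb: "(\<lambda>m. \<Sum>k\<in>K. g k m) sums ((x - cos \<theta>)^p * (ln (cosh \<eta> - cos \<theta>) - (\<eta> - ln 2)))"
    unfolding gsum by (rule sums_mult[OF log_series[OF assms(1)]])
  have summ: "summable (g k)" for k
  proof (rule summable_comparison_test)
    show "summable (\<lambda>m. 2 * \<bar>a k\<bar> * exp (-\<eta>) ^ m)"
      using assms(1) by (intro summable_mult summable_geometric) simp
    have "norm (g k m) \<le> 2 * \<bar>a k\<bar> * exp (-\<eta>) ^ m" for m
    proof -
      have e: "exp (-\<eta>) ^ m = exp (- real m * \<eta>)" by (simp add: exp_of_nat_mult[symmetric])
      have "norm (g k m) = 2 * \<bar>a k\<bar> * exp (- real m * \<eta>) * (\<bar>cos (of_int k * \<theta> + real m * \<theta>)\<bar> / real m)"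
        by (simp add: g_def abs_mult)
      also have "\<dots> \<le> 2 * \<bar>a k\<bar> * exp (- real m * \<eta>) * 1"
      proof (rule mult_left_mono)
        show "\<bar>cos (of_int k * \<theta> + real m * \<theta>)\<bar> / real m \<le> 1"
        proof (cases "m = 0")
          case False
          then have "\<bar>cos (of_int k * \<theta> + real m * \<theta>)\<bar> \<le> real m"
            using abs_cos_le_one[of "of_int k * \<theta> + real m * \<theta>"] by linarith
          then show ?thesis using False by (simp add: divide_le_eq_1)
        qed simp
      qed simp
      finally show ?thesis using e by simp
    qed
    then show "\<exists>N. \<forall>n\<ge>N. norm (g k n) \<le> 2 * \<bar>a k\<bar> * exp (-\<eta>) ^ n" by blast
  qed
  define s where "s k = suminf (g k)" for k
  have gs: "g k sums s k" for k using summ[of k] by (simp add: s_def summable_sums)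
  have sumS: "(\<Sum>k\<in>K. s k) = (x - cos \<theta>)^p * (ln (cosh \<eta> - cos \<theta>) - (\<eta> - ln 2))"
    using sums_unique2[OF sums_sum[OF gs] comb] .
  have tails: "(\<lambda>j. \<Sum>k\<in>K. g k (j + N k)) sums (\<Sum>k\<in>K. (s k - (\<Sum>i<N k. g k i)))"
    by (rule sums_sum) (rule sums_split_initial_segment[OF gs])
  have tm: "(let n = j + p + 1 in
            2 * cos (real n * \<theta>) * exp (- real n * \<eta>) *
            (\<Sum>k\<in>{-int p..int p}. (-1) powi (k + 1) * exp (real_of_int k * \<eta>) * logR p k x
                                        / (real n - real_of_int k)))
        = (\<Sum>k\<in>K. g k (j + N k))" for j
    unfolding Let_def sum_distrib_left K_def
  proof (rule sum.cong[OF refl])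
    fix k assume k: "k \<in> {-int p..int p}"
    define n where "n = j + p + 1"
    have rn: "real (j + N k) = real n - of_int k" using k by (simp add: N_def n_def)
    have ee: "exp (- (real n - of_int k) * \<eta>) = exp (- real n * \<eta>) * exp (of_int k * \<eta>)"
      by (simp add: exp_add[symmetric] algebra_simps)
    have cc: "cos (of_int k * \<theta> + (real n - of_int k) * \<theta>) = cos (real n * \<theta>)"
      by (simp add: algebra_simps)
    show "2 * cos (real (j + p + 1) * \<theta>) * exp (- real (j + p + 1) * \<eta>) *
         ((-1) powi (k + 1) * exp (real_of_int k * \<eta>) * logR p k x / (real (j + p + 1) - real_of_int k))
         = g k (j + N k)"
      unfolding g_def rn n_def[symmetric] ee cc a_def m1_powi by (simp add: algebra_simps)
  qed
  have F1: "(\<Sum>i<N k. g k i) = (\<Sum>n\<in>{k+1..int p}. f k n)" if k: "k \<in> K" for k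
  proof -
    have "(\<Sum>i<N k. g k i) = (\<Sum>i\<in>{1..<N k}. g k i)"
      by (rule sum.mono_neutral_right) (auto simp: g_def)
    also have "\<dots> = (\<Sum>n\<in>{k+1..int p}. f k n)"
    proof (rule sum.reindex_bij_witness[where j = "\<lambda>i. k + int i" and i = "\<lambda>n. nat (n - k)"])
      fix i assume "i \<in> {1..<N k}"
      then show "nat (k + int i - k) = i" "k + int i \<in> {k+1..int p}" using k by (auto simp: N_def K_def)
      show "f k (k + int i) = g k i" by (simp add: f_def g_def algebra_simps)
    next
      fix n assume "n \<in> {k+1..int p}"
      then show "k + int (nat (n - k)) = n" "nat (n - k) \<in> {1..<N k}" using k by (auto simp: N_def K_def)
    qed
    finally show ?thesis .
  qed
  define G where "G n = (\<Sum>k\<in>{-int p..n-1}. f k n)" for n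
  have F2: "(\<Sum>k\<in>K. \<Sum>n\<in>{k+1..int p}. f k n) = (\<Sum>n\<in>K. G n)"
  proof -
    have "(\<Sum>k\<in>K. \<Sum>n\<in>{k+1..int p}. f k n) = (\<Sum>k\<in>K. \<Sum>n\<in>{n\<in>K. k < n}. f k n)"
      by (rule sum.cong[OF refl], rule sum.cong) (auto simp: K_def)
    also have "\<dots> = (\<Sum>n\<in>K. \<Sum>k\<in>{k\<in>K. k < n}. f k n)"
      by (rule sum.swap_restrict) (simp_all add: finK)
    also have "\<dots> = (\<Sum>n\<in>K. G n)"
      unfolding G_def by (rule sum.cong[OF refl], rule sum.cong) (auto simp: K_def)
    finally show ?thesis .
  qed
  have F3: "(\<Sum>n\<in>K. G n) = (\<Sum>n=0..p. G (int n)) + (\<Sum>n\<in>{1..<p}. G (- int n))"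
  proof -
    have KK: "K = {0..int p} \<union> {-int p..-1}" by (auto simp: K_def)
    have "(\<Sum>n\<in>K. G n) = (\<Sum>n\<in>{0..int p}. G n) + (\<Sum>n\<in>{-int p..-1}. G n)"
      unfolding KK by (rule sum.union_disjoint) auto
    moreover have "(\<Sum>n\<in>{0..int p}. G n) = (\<Sum>n=0..p. G (int n))"
      by (rule sum.reindex_bij_witness[where i = "\<lambda>i. int i" and j = "\<lambda>n. nat n"]) auto
    moreover have "(\<Sum>n\<in>{-int p..-1}. G n) = (\<Sum>n\<in>{-int p+1..-1}. G n)"
      by (rule sum.mono_neutral_right) (auto simp: G_def)
    moreover have "(\<Sum>n\<in>{-int p+1..-1}. G n) = (\<Sum>n\<in>{1..<p}. G (- int n))"
      by (rule sum.reindex_bij_witness[where i = "\<lambda>i. - int i" and j = "\<lambda>n. nat (- n)"]) auto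
    ultimately show ?thesis by simp
  qed
  have first: "2 * (\<Sum>n=0..p. cos (real n * \<theta>) * exp (- real n * \<eta>) *
                 (\<Sum>k\<in>{-int p..int n - 1}. (-1) powi (k + 1) * exp (real_of_int k * \<eta>) * logR p k x
                                        / (real n - real_of_int k))) = (\<Sum>n=0..p. G (int n))"
    unfolding sum_distrib_left G_def
  proof (rule sum.cong[OF refl], rule sum.cong[OF refl])
    fix n :: nat and k :: int
    have ee: "exp (- (real n - of_int k) * \<eta>) = exp (- real n * \<eta>) * exp (of_int k * \<eta>)"
      by (simp add: exp_add[symmetric] algebra_simps)
    show "2 * (cos (real n * \<theta>) * exp (- real n * \<eta>) *
          ((-1) powi (k + 1) * exp (real_of_int k * \<eta>) * logR p k x / (real n - real_of_int k))) = f k (int n)"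
      unfolding f_def a_def m1_powi by (simp add: exp_add[symmetric] algebra_simps)
  qed
  have second: "2 * (\<Sum>n\<in>{1..<p}. cos (real n * \<theta>) * exp (real n * \<eta>) *
                 (\<Sum>k\<in>{-int p..-int n - 1}. (-1) powi (k + 1) * exp (real_of_int k * \<eta>) * logR p k x
                                        / (real n + real_of_int k))) = - (\<Sum>n\<in>{1..<p}. G (- int n))"
    unfolding sum_distrib_left G_def sum_negf[symmetric]
  proof (rule sum.cong[OF refl], rule sum.cong[OF refl])
    fix n :: nat and k :: int
    have ee: "exp (- (- real n - of_int k) * \<eta>) = exp (real n * \<eta>) * exp (of_int k * \<eta>)"
      by (simp add: exp_add[symmetric] algebra_simps)
    have d: "real_of_int (- int n) - of_int k = - (real n + of_int k)" by simp
    show "2 * (cos (real n * \<theta>) * exp (real n * \<eta>) *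
          ((-1) powi (k + 1) * exp (real_of_int k * \<eta>) * logR p k x / (real n + real_of_int k))) = - f k (- int n)"
      unfolding f_def a_def m1_powi d divide_minus_right by (simp add: exp_add[symmetric] algebra_simps)
  qed
  have Fid: "(\<Sum>k\<in>K. (\<Sum>i<N k. g k i)) = (\<Sum>n=0..p. G (int n)) + (\<Sum>n\<in>{1..<p}. G (- int n))"
  proof -
    have "(\<Sum>k\<in>K. (\<Sum>i<N k. g k i)) = (\<Sum>k\<in>K. \<Sum>n\<in>{k+1..int p}. f k n)"
      by (rule sum.cong[OF refl]) (rule F1)
    then show ?thesis using F2 F3 by simp
  qed
  have fun_eq: "(\<lambda>m. let n = m + p + 1 in
            2 * cos (real n * \<theta>) * exp (- real n * \<eta>) *
            (\<Sum>k\<in>{-int p..int p}. (-1) powi (k + 1) * exp (real_of_int k * \<eta>) * logR p k x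
                                        / (real n - real_of_int k))) = (\<lambda>j. \<Sum>k\<in>K. g k (j + N k))"
    using tm by (rule ext)
  show ?thesis
    unfolding fun_eq first second
    using tails unfolding sum_subtractf sumS Fid x_def by (simp add: algebra_simps)
qed

end
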